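(* Let $L=\mathbb{Z}\times\mathbb{Z}$ with the product $$(p,q)\cdot(p',q')=\Bigl(p+p',\ q+q'+\binom{p}{2}p'\Bigr).$$ Then $L$ is a loop which is torsion-free nilpotent of class $3$, with $$D_2L=D_3L=\{(0,q)\mid q\in\mathbb{Z}\},$$ while $\mathrm{LMlt}(L)$ is nilpotent of class $2$.
   Context: Here $\binom{p}{2}=p(p-1)/2$ for $p\in\mathbb{Z}$. A loop is a set with a product and two-sided identity in which all left multiplications $x\mapsto ax$ and right multiplications $x\mapsto xa$ are bijective. $\mathrm{LMlt}(L)$ is the group of permutations of $L$ generated by the left multiplications $L_a\colon x\mapsto ax$. The loop algebra $\mathbb{Q}L$ has basis $L$ with bilinearly extended product; $I$ is the kernel of the linear map $\mathbb{Q}L\to\mathbb{Q}$ sending each element of $L$ to $1$; $I^k$ is the ideal spanned by all products (any bracketing) of at least $k$ elements of $I$; $D_kL=\{g\in L\mid g-1\in I^k\}$. $L$ is torsion-free nilpotent of class $n$ if $D_{n+1}L$ is trivial and $D_nL$ is not. A group $G$ is nilpotent of class $c$ if $\gamma_{c+1}G=1\neq\gamma_cG$, where $\gamma_1G=G$, $\gamma_{k+1}G=[G,\gamma_kG]$. *)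

theory Defs
  imports Complex_Main "HOL-Algebra.Generated_Groups" "HOL-Algebra.Bij"
begin

definition is_loop :: "('a \<Rightarrow> 'a \<Rightarrow> 'a) \<Rightarrow> 'a \<Rightarrow> bool" where
  "is_loop m e \<longleftrightarrow> (\<forall>x. m e x = x \<and> m x e = x)
      \<and> (\<forall>a. bij (\<lambda>x. m a x)) \<and> (\<forall>a. bij (\<lambda>x. m x a))"

section \<open>The loop algebra QL: finitely supported functions L \<Rightarrow> rat\<close>

definition fin_supp :: "('a \<Rightarrow> rat) \<Rightarrow> bool" where
  "fin_supp f \<longleftrightarrow> finite {x. f x \<noteq> 0}"

definition basis_el :: "'a \<Rightarrow> ('a \<Rightarrow> rat)" where
  "basis_el g = (\<lambda>x. if x = g then 1 else 0)"

definition la_mult :: "('a \<Rightarrow> 'a \<Rightarrow> 'a) \<Rightarrow> ('a \<Rightarrow> rat) \<Rightarrow> ('a \<Rightarrow> rat) \<Rightarrow> ('a \<Rightarrow> rat)" where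
  "la_mult m f h = (\<lambda>z. \<Sum>(x, y) \<in> {(x, y). f x \<noteq> 0 \<and> h y \<noteq> 0 \<and> m x y = z}. f x * h y)"

definition augm :: "('a \<Rightarrow> rat) \<Rightarrow> rat" where
  "augm f = (\<Sum>x \<in> {x. f x \<noteq> 0}. f x)"

definition aug_ideal :: "('a \<Rightarrow> rat) set" where
  "aug_ideal = {f. fin_supp f \<and> augm f = 0}"

inductive I_prod :: "('a \<Rightarrow> 'a \<Rightarrow> 'a) \<Rightarrow> nat \<Rightarrow> ('a \<Rightarrow> rat) \<Rightarrow> bool"
  for m where
  base: "f \<in> aug_ideal \<Longrightarrow> I_prod m 1 f"
| mult: "I_prod m i f \<Longrightarrow> I_prod m j h \<Longrightarrow> I_prod m (i + j) (la_mult m f h)"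

text \<open>I^k: the two-sided ideal of QL generated by products of at least k elements of I\<close>
inductive_set I_pow :: "('a \<Rightarrow> 'a \<Rightarrow> 'a) \<Rightarrow> nat \<Rightarrow> ('a \<Rightarrow> rat) set"
  for m k where
  gen: "I_prod m n f \<Longrightarrow> k \<le> n \<Longrightarrow> f \<in> I_pow m k"
| zero: "(\<lambda>_. 0) \<in> I_pow m k"
| add: "f \<in> I_pow m k \<Longrightarrow> h \<in> I_pow m k \<Longrightarrow> (\<lambda>x. f x + h x) \<in> I_pow m k"
| smult: "f \<in> I_pow m k \<Longrightarrow> (\<lambda>x. c * f x) \<in> I_pow m k"
| lmult: "f \<in> I_pow m k \<Longrightarrow> fin_supp a \<Longrightarrow> la_mult m a f \<in> I_pow m k"
| rmult: "f \<in> I_pow m k \<Longrightarrow> fin_supp a \<Longrightarrow> la_mult m f a \<in> I_pow m k"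

definition dim_sub :: "('a \<Rightarrow> 'a \<Rightarrow> 'a) \<Rightarrow> 'a \<Rightarrow> nat \<Rightarrow> 'a set" where
  "dim_sub m e k = {g. (\<lambda>x. basis_el g x - basis_el e x) \<in> I_pow m k}"

definition tf_nilpotent_class :: "('a \<Rightarrow> 'a \<Rightarrow> 'a) \<Rightarrow> 'a \<Rightarrow> nat \<Rightarrow> bool" where
  "tf_nilpotent_class m e n \<longleftrightarrow> dim_sub m e (n + 1) = {e} \<and> dim_sub m e n \<noteq> {e}"

definition LMlt :: "('a \<Rightarrow> 'a \<Rightarrow> 'a) \<Rightarrow> ('a \<Rightarrow> 'a) monoid" where
  "LMlt m = subgroup_generated (BijGroup UNIV) (range (\<lambda>a. (\<lambda>x. m a x)))"

text \<open>lower_central G k = gamma_(k+1) G\<close>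
primrec lower_central :: "('a, 'b) monoid_scheme \<Rightarrow> nat \<Rightarrow> 'a set" where
  "lower_central G 0 = carrier G"
| "lower_central G (Suc k) = generate G
     {inv\<^bsub>G\<^esub> g \<otimes>\<^bsub>G\<^esub> inv\<^bsub>G\<^esub> h \<otimes>\<^bsub>G\<^esub> g \<otimes>\<^bsub>G\<^esub> h | g h. g \<in> carrier G \<and> h \<in> lower_central G k}"

definition nilpotent_class :: "('a, 'b) monoid_scheme \<Rightarrow> nat \<Rightarrow> bool" where
  "nilpotent_class G c \<longleftrightarrow> 1 \<le> c \<and> lower_central G c = {\<one>\<^bsub>G\<^esub>} \<and> lower_central G (c - 1) \<noteq> {\<one>\<^bsub>G\<^esub>}"

definition binom2 :: "int \<Rightarrow> int" where
  "binom2 p = p * (p - 1) div 2"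

definition exloop :: "int \<times> int \<Rightarrow> int \<times> int \<Rightarrow> int \<times> int" where
  "exloop a b = (case a of (p, q) \<Rightarrow> case b of (p', q') \<Rightarrow>
      (p + p', q + q' + binom2 p * p'))"

end

theory Submission
  imports Defs
begin



lemma exloop_eq: "exloop x y = (fst x + fst y, snd x + snd y + binom2 (fst x) * fst y)"
  by (cases x, cases y) (simp add: exloop_def)

lemma bij_L: "bij (\<lambda>x. exloop a x)"
  apply (rule o_bij[where g="\<lambda>y. (fst y - fst a, snd y - snd a - binom2 (fst a) * (fst y - fst a))"])
  by (auto simp: exloop_eq fun_eq_iff)

lemma bij_R: "bij (\<lambda>x. exloop x a)"
  apply (rule o_bij[where g="\<lambda>y. (fst y - fst a, snd y - snd a - binom2 (fst y - fst a) * fst a)"])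
  by (auto simp: exloop_eq fun_eq_iff)

lemma loop: "is_loop exloop (0,0)"
  unfolding is_loop_def using bij_R by (simp add: bij_L exloop_eq binom2_def)




definition ev :: "('a \<Rightarrow> rat) \<Rightarrow> ('a \<Rightarrow> rat) \<Rightarrow> rat" where
  "ev F f = (\<Sum>x\<in>{x. f x \<noteq> 0}. f x * F x)"

lemma ev_superset:
  assumes "finite A" "{x. f x \<noteq> 0} \<subseteq> A"
  shows "ev F f = (\<Sum>x\<in>A. f x * F x)"
  unfolding ev_def using assms by (intro sum.mono_neutral_left) auto

lemma fin_supp_basis[simp]: "fin_supp (basis_el a)"
  unfolding fin_supp_def basis_el_def by simp

lemma fin_supp_zero[simp]: "fin_supp (\<lambda>_. 0)"
  unfolding fin_supp_def by simp

lemma fin_supp_add[simp]: "fin_supp f \<Longrightarrow> fin_supp h \<Longrightarrow> fin_supp (\<lambda>x. f x + h x)"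
  unfolding fin_supp_def by (rule finite_subset[of _ "{x. f x \<noteq> 0} \<union> {x. h x \<noteq> 0}"]) auto

lemma fin_supp_diff[simp]: "fin_supp f \<Longrightarrow> fin_supp h \<Longrightarrow> fin_supp (\<lambda>x. f x - h x)"
  unfolding fin_supp_def by (rule finite_subset[of _ "{x. f x \<noteq> 0} \<union> {x. h x \<noteq> 0}"]) auto

lemma fin_supp_smult[simp]: "fin_supp f \<Longrightarrow> fin_supp (\<lambda>x. c * f x)"
  unfolding fin_supp_def by (rule finite_subset[of _ "{x. f x \<noteq> 0}"]) auto

lemma la_mult_eq:
  assumes "finite A" "{x. f x \<noteq> 0} \<subseteq> A" "finite B" "{y. h y \<noteq> 0} \<subseteq> B"
  shows "la_mult m f h z = (\<Sum>x\<in>A. \<Sum>y\<in>B. if m x y = z then f x * h y else 0)"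
proof -
  have "la_mult m f h z = (\<Sum>(x,y)\<in>{p \<in> A \<times> B. m (fst p) (snd p) = z}. f x * h y)"
    unfolding la_mult_def using assms
    by (intro sum.mono_neutral_left) (auto intro: finite_subset[of _ "A \<times> B"])
  also have "\<dots> = (\<Sum>p\<in>A \<times> B. if m (fst p) (snd p) = z then f (fst p) * h (snd p) else 0)"
    using assms by (subst sum.inter_filter[symmetric]) (auto simp: case_prod_beta)
  also have "\<dots> = (\<Sum>x\<in>A. \<Sum>y\<in>B. if m x y = z then f x * h y else 0)"
    by (subst sum.cartesian_product) (simp add: case_prod_beta)
  finally show ?thesis .
qed

lemma fin_supp_la_mult[simp]:
  assumes "fin_supp f" "fin_supp h" shows "fin_supp (la_mult m f h)"
proof -
  let ?A = "{x. f x \<noteq> 0}" and ?B = "{y. h y \<noteq> 0}"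
  have "{z. la_mult m f h z \<noteq> 0} \<subseteq> (\<lambda>(x,y). m x y) ` (?A \<times> ?B)"
  proof
    fix z assume "z \<in> {z. la_mult m f h z \<noteq> 0}"
    then have "la_mult m f h z \<noteq> 0" by simp
    then have "{(x, y). f x \<noteq> 0 \<and> h y \<noteq> 0 \<and> m x y = z} \<noteq> {}"
      unfolding la_mult_def by (metis sum.empty)
    then show "z \<in> (\<lambda>(x,y). m x y) ` (?A \<times> ?B)" by force
  qed
  then show ?thesis using assms unfolding fin_supp_def by (meson finite_SigmaI finite_imageI finite_subset)
qed

lemma ev_la_mult:
  assumes "fin_supp f" "fin_supp h"
  shows "ev F (la_mult m f h) = (\<Sum>x\<in>{x. f x \<noteq> 0}. \<Sum>y\<in>{y. h y \<noteq> 0}. f x * h y * F (m x y))"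
proof -
  let ?A = "{x. f x \<noteq> 0}" and ?B = "{y. h y \<noteq> 0}"
  let ?C = "(\<lambda>(x,y). m x y) ` (?A \<times> ?B)"
  have fin: "finite ?A" "finite ?B" using assms unfolding fin_supp_def by auto
  have sub: "{z. la_mult m f h z \<noteq> 0} \<subseteq> ?C"
  proof
    fix z assume "z \<in> {z. la_mult m f h z \<noteq> 0}"
    then have "la_mult m f h z \<noteq> 0" by simp
    then have "{(x, y). f x \<noteq> 0 \<and> h y \<noteq> 0 \<and> m x y = z} \<noteq> {}"
      unfolding la_mult_def by (metis sum.empty)
    then show "z \<in> ?C" by force
  qed
  have "ev F (la_mult m f h) = (\<Sum>z\<in>?C. la_mult m f h z * F z)"
    using fin sub by (intro ev_superset) auto
  also have "\<dots> = (\<Sum>z\<in>?C. \<Sum>x\<in>?A. \<Sum>y\<in>?B. (if m x y = z then f x * h y * F z else 0))"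
    by (intro sum.cong refl, subst la_mult_eq[OF fin(1) _ fin(2)]) (auto simp: sum_distrib_right intro!: sum.cong)
  also have "\<dots> = (\<Sum>x\<in>?A. \<Sum>y\<in>?B. \<Sum>z\<in>?C. (if m x y = z then f x * h y * F z else 0))"
    apply (subst sum.swap[where A="?C"]) apply (rule sum.cong[OF refl]) apply (rule sum.swap[where A="?C"]) done
  also have "\<dots> = (\<Sum>x\<in>?A. \<Sum>y\<in>?B. f x * h y * F (m x y))"
  proof (intro sum.cong refl)
    fix x y assume "x \<in> ?A" "y \<in> ?B"
    then have "m x y \<in> ?C" by force
    then show "(\<Sum>z\<in>?C. (if m x y = z then f x * h y * F z else 0)) = f x * h y * F (m x y)"
      using fin by (simp add: sum.delta)
  qed
  finally show ?thesis .
qed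

lemma ev_lmult:
  assumes "fin_supp f" "fin_supp h"
  shows "ev F (la_mult m f h) = (\<Sum>x\<in>{x. f x \<noteq> 0}. f x * ev (\<lambda>y. F (m x y)) h)"
proof -
  have "ev F (la_mult m f h) = (\<Sum>x\<in>{x. f x \<noteq> 0}. \<Sum>y\<in>{y. h y \<noteq> 0}. f x * h y * F (m x y))"
    by (rule ev_la_mult[OF assms])
  also have "\<dots> = (\<Sum>x\<in>{x. f x \<noteq> 0}. f x * ev (\<lambda>y. F (m x y)) h)"
    by (simp add: ev_def sum_distrib_left mult.assoc)
  finally show ?thesis .
qed

lemma ev_rmult:
  assumes "fin_supp f" "fin_supp h"
  shows "ev F (la_mult m f h) = (\<Sum>y\<in>{y. h y \<noteq> 0}. h y * ev (\<lambda>x. F (m x y)) f)"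
proof -
  have "ev F (la_mult m f h) = (\<Sum>x\<in>{x. f x \<noteq> 0}. \<Sum>y\<in>{y. h y \<noteq> 0}. f x * h y * F (m x y))"
    by (rule ev_la_mult[OF assms])
  also have "\<dots> = (\<Sum>y\<in>{y. h y \<noteq> 0}. h y * ev (\<lambda>x. F (m x y)) f)"
    by (subst sum.swap) (simp add: ev_def sum_distrib_left mult_ac)
  finally show ?thesis .
qed

lemma ev_prod:
  assumes "fin_supp f" "fin_supp h"
  shows "(\<Sum>x\<in>{x. f x \<noteq> 0}. \<Sum>y\<in>{y. h y \<noteq> 0}. f x * h y * (A x * B y)) = ev A f * ev B h"
  unfolding ev_def sum_product by (simp add: mult_ac)

lemma la_mult_basis: "la_mult m (basis_el a) (basis_el b) = basis_el (m a b)"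
  by (rule ext, subst la_mult_eq[of "{a}" _ "{b}"]) (auto simp: basis_el_def)

lemma la_mult_add_left:
  assumes "fin_supp f1" "fin_supp f2" "fin_supp h"
  shows "la_mult m (\<lambda>x. f1 x + f2 x) h = (\<lambda>z. la_mult m f1 h z + la_mult m f2 h z)"
proof
  fix z
  let ?A = "{x. f1 x \<noteq> 0} \<union> {x. f2 x \<noteq> 0}" and ?B = "{y. h y \<noteq> 0}"
  have fin: "finite ?A" "finite ?B" using assms unfolding fin_supp_def by auto
  have e1: "la_mult m (\<lambda>x. f1 x + f2 x) h z = (\<Sum>x\<in>?A. \<Sum>y\<in>?B. if m x y = z then (f1 x + f2 x) * h y else 0)"
    by (rule la_mult_eq) (use fin in auto)
  have e2: "la_mult m f1 h z = (\<Sum>x\<in>?A. \<Sum>y\<in>?B. if m x y = z then f1 x * h y else 0)"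
    by (rule la_mult_eq) (use fin in auto)
  have e3: "la_mult m f2 h z = (\<Sum>x\<in>?A. \<Sum>y\<in>?B. if m x y = z then f2 x * h y else 0)"
    by (rule la_mult_eq) (use fin in auto)
  show "la_mult m (\<lambda>x. f1 x + f2 x) h z = la_mult m f1 h z + la_mult m f2 h z"
    unfolding e1 e2 e3 sum.distrib[symmetric] by (intro sum.cong refl) (simp add: distrib_right)
qed

lemma la_mult_smult_left:
  assumes "fin_supp f" "fin_supp h"
  shows "la_mult m (\<lambda>x. c * f x) h = (\<lambda>z. c * la_mult m f h z)"
proof
  fix z
  let ?A = "{x. f x \<noteq> 0}" and ?B = "{y. h y \<noteq> 0}"
  have fin: "finite ?A" "finite ?B" using assms unfolding fin_supp_def by auto
  have e1: "la_mult m (\<lambda>x. c * f x) h z = (\<Sum>x\<in>?A. \<Sum>y\<in>?B. if m x y = z then (c * f x) * h y else 0)"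
    by (rule la_mult_eq) (use fin in auto)
  have e2: "la_mult m f h z = (\<Sum>x\<in>?A. \<Sum>y\<in>?B. if m x y = z then f x * h y else 0)"
    by (rule la_mult_eq) (use fin in auto)
  show "la_mult m (\<lambda>x. c * f x) h z = c * la_mult m f h z"
    unfolding e1 e2 sum_distrib_left by (intro sum.cong refl) simp
qed

lemma la_mult_add_right:
  assumes "fin_supp f" "fin_supp h1" "fin_supp h2"
  shows "la_mult m f (\<lambda>x. h1 x + h2 x) = (\<lambda>z. la_mult m f h1 z + la_mult m f h2 z)"
proof
  fix z
  let ?B = "{x. h1 x \<noteq> 0} \<union> {x. h2 x \<noteq> 0}" and ?A = "{y. f y \<noteq> 0}"
  have fin: "finite ?A" "finite ?B" using assms unfolding fin_supp_def by auto
  have e1: "la_mult m f (\<lambda>x. h1 x + h2 x) z = (\<Sum>x\<in>?A. \<Sum>y\<in>?B. if m x y = z then f x * (h1 y + h2 y) else 0)"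
    by (rule la_mult_eq) (use fin in auto)
  have e2: "la_mult m f h1 z = (\<Sum>x\<in>?A. \<Sum>y\<in>?B. if m x y = z then f x * h1 y else 0)"
    by (rule la_mult_eq) (use fin in auto)
  have e3: "la_mult m f h2 z = (\<Sum>x\<in>?A. \<Sum>y\<in>?B. if m x y = z then f x * h2 y else 0)"
    by (rule la_mult_eq) (use fin in auto)
  show "la_mult m f (\<lambda>x. h1 x + h2 x) z = la_mult m f h1 z + la_mult m f h2 z"
    unfolding e1 e2 e3 sum.distrib[symmetric] by (intro sum.cong refl) (simp add: distrib_left)
qed

lemma la_mult_smult_right:
  assumes "fin_supp f" "fin_supp h"
  shows "la_mult m f (\<lambda>x. c * h x) = (\<lambda>z. c * la_mult m f h z)"
proof
  fix z
  let ?A = "{x. f x \<noteq> 0}" and ?B = "{y. h y \<noteq> 0}"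
  have fin: "finite ?A" "finite ?B" using assms unfolding fin_supp_def by auto
  have e1: "la_mult m f (\<lambda>x. c * h x) z = (\<Sum>x\<in>?A. \<Sum>y\<in>?B. if m x y = z then f x * (c * h y) else 0)"
    by (rule la_mult_eq) (use fin in auto)
  have e2: "la_mult m f h z = (\<Sum>x\<in>?A. \<Sum>y\<in>?B. if m x y = z then f x * h y else 0)"
    by (rule la_mult_eq) (use fin in auto)
  show "la_mult m f (\<lambda>x. c * h x) z = c * la_mult m f h z"
    unfolding e1 e2 sum_distrib_left by (intro sum.cong refl) (simp add: mult_ac)
qed

lemma diff_as: "(\<lambda>x. f x - h x) = (\<lambda>x. f x + (-1) * h x)" for f h :: "'a \<Rightarrow> rat" by auto

lemma la_mult_diff_left:
  assumes "fin_supp f1" "fin_supp f2" "fin_supp h"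
  shows "la_mult m (\<lambda>x. f1 x - f2 x) h = (\<lambda>z. la_mult m f1 h z - la_mult m f2 h z)"
  unfolding diff_as[of f1 f2]
  by (simp only: la_mult_add_left[OF assms(1) fin_supp_smult[OF assms(2)] assms(3)] la_mult_smult_left[OF assms(2,3)]) simp

lemma la_mult_diff_right:
  assumes "fin_supp f" "fin_supp h1" "fin_supp h2"
  shows "la_mult m f (\<lambda>x. h1 x - h2 x) = (\<lambda>z. la_mult m f h1 z - la_mult m f h2 z)"
  unfolding diff_as[of h1 h2]
  by (simp only: la_mult_add_right[OF assms(1,2) fin_supp_smult[OF assms(3)]] la_mult_smult_right[OF assms(1,3)]) simp




definition c1 :: "int \<times> int \<Rightarrow> rat" where "c1 x = 1"
definition mo1 :: "int \<times> int \<Rightarrow> rat" where "mo1 x = of_int (fst x)"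
definition mo2 :: "int \<times> int \<Rightarrow> rat" where "mo2 x = of_int (fst x) ^ 2"
definition mo3 :: "int \<times> int \<Rightarrow> rat" where "mo3 x = of_int (fst x) ^ 3"
definition moq :: "int \<times> int \<Rightarrow> rat" where "moq x = of_int (snd x)"

lemma binom2_rat: "(of_int (binom2 p) :: rat) = (of_int p ^ 2 - of_int p) / 2"
proof -
  have "even (p * (p - 1))" by simp
  then have "binom2 p * 2 = p * (p - 1)" unfolding binom2_def by simp
  then have "(of_int (binom2 p) :: rat) * 2 = of_int p * (of_int p - 1)"
    by (metis of_int_1 of_int_diff of_int_mult of_int_numeral)
  then show ?thesis by (simp add: power2_eq_square algebra_simps)
qed

definition dsum :: "('a \<Rightarrow> rat) \<Rightarrow> ('a \<Rightarrow> rat) \<Rightarrow> ('a \<Rightarrow> 'a \<Rightarrow> rat) \<Rightarrow> rat" where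
  "dsum f h K = (\<Sum>x\<in>{x. f x \<noteq> 0}. \<Sum>y\<in>{y. h y \<noteq> 0}. f x * h y * K x y)"

lemma dsum_add: "dsum f h (\<lambda>x y. K1 x y + K2 x y) = dsum f h K1 + dsum f h K2"
  unfolding dsum_def by (simp add: distrib_left sum.distrib)

lemma dsum_smult: "dsum f h (\<lambda>x y. c * K x y) = c * dsum f h K"
  unfolding dsum_def by (simp add: sum_distrib_left mult_ac)

lemma dsum_prod: "dsum f h (\<lambda>x y. A x * B y) = ev A f * ev B h"
  unfolding dsum_def ev_def sum_product by (simp add: mult_ac)

lemma ev_dsum: "fin_supp f \<Longrightarrow> fin_supp h \<Longrightarrow> ev G (la_mult m f h) = dsum f h (\<lambda>x y. G (m x y))"
  unfolding dsum_def by (rule ev_la_mult)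

lemma sp1: "(\<lambda>x y. c1 (exloop x y)) = (\<lambda>x y. c1 x * c1 y)"
  by (simp add: c1_def)
lemma sp2: "(\<lambda>x y. mo1 (exloop x y)) = (\<lambda>x y. mo1 x * c1 y + c1 x * mo1 y)"
  by (simp add: c1_def mo1_def exloop_eq fun_eq_iff)
lemma sp3: "(\<lambda>x y. mo2 (exloop x y)) = (\<lambda>x y. mo2 x * c1 y + (2 * (mo1 x * mo1 y) + c1 x * mo2 y))"
  by (simp add: c1_def mo1_def mo2_def exloop_eq fun_eq_iff power2_eq_square algebra_simps)
lemma sp4: "(\<lambda>x y. mo3 (exloop x y)) = (\<lambda>x y. mo3 x * c1 y + (3 * (mo2 x * mo1 y) + (3 * (mo1 x * mo2 y) + c1 x * mo3 y)))"
  by (simp add: c1_def mo1_def mo2_def mo3_def exloop_eq fun_eq_iff power2_eq_square power3_eq_cube algebra_simps)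
lemma sp5: "(\<lambda>x y. moq (exloop x y)) = (\<lambda>x y. moq x * c1 y + (c1 x * moq y + ((1/2) * (mo2 x * mo1 y) + (-1/2) * (mo1 x * mo1 y))))"
  by (simp add: c1_def mo1_def mo2_def moq_def exloop_eq fun_eq_iff binom2_rat field_simps)

lemma Iprod_van:
  "I_prod exloop n f \<Longrightarrow> fin_supp f \<and> 1 \<le> n \<and> ev c1 f = 0 \<and> (2 \<le> n \<longrightarrow> ev mo1 f = 0)
     \<and> (3 \<le> n \<longrightarrow> ev mo2 f = 0) \<and> (4 \<le> n \<longrightarrow> ev mo3 f = 0 \<and> ev moq f = 0)"
proof (induction rule: I_prod.induct)
  case (base f)
  then show ?case by (simp add: aug_ideal_def ev_def augm_def c1_def)
next
  case (mult i f j h)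
  have ff: "fin_supp f" "fin_supp h" using mult.IH by auto
  have e1: "ev c1 (la_mult exloop f h) = ev c1 f * ev c1 h"
    by (simp only: ev_dsum[OF ff] sp1 dsum_add dsum_smult dsum_prod)
  have e2: "ev mo1 (la_mult exloop f h) = ev mo1 f * ev c1 h + ev c1 f * ev mo1 h"
    by (simp only: ev_dsum[OF ff] sp2 dsum_add dsum_smult dsum_prod)
  have e3: "ev mo2 (la_mult exloop f h) = ev mo2 f * ev c1 h + (2 * (ev mo1 f * ev mo1 h) + ev c1 f * ev mo2 h)"
    by (simp only: ev_dsum[OF ff] sp3 dsum_add dsum_smult dsum_prod)
  have e4: "ev mo3 (la_mult exloop f h) = ev mo3 f * ev c1 h + (3 * (ev mo2 f * ev mo1 h) + (3 * (ev mo1 f * ev mo2 h) + ev c1 f * ev mo3 h))"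
    by (simp only: ev_dsum[OF ff] sp4 dsum_add dsum_smult dsum_prod)
  have e5: "ev moq (la_mult exloop f h) = ev moq f * ev c1 h + (ev c1 f * ev moq h + ((1/2) * (ev mo2 f * ev mo1 h) + (-1/2) * (ev mo1 f * ev mo1 h)))"
    by (simp only: ev_dsum[OF ff] sp5 dsum_add dsum_smult dsum_prod)
  have i1: "1 \<le> i" "1 \<le> j" using mult.IH by auto
  show ?case
  proof (intro conjI impI)
    show "fin_supp (la_mult exloop f h)" using ff by simp
    show "ev c1 (la_mult exloop f h) = 0" using e1 mult.IH by simp
    show "ev mo1 (la_mult exloop f h) = 0" if "2 \<le> i + j" using e2 mult.IH by simp
    show "ev mo2 (la_mult exloop f h) = 0" if "3 \<le> i + j"
      using e3 mult.IH that by (cases "2 \<le> i") auto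
    show "ev mo3 (la_mult exloop f h) = 0" if "4 \<le> i + j"
      using e4 mult.IH that by (cases "3 \<le> i"; cases "2 \<le> i") auto
    show "ev moq (la_mult exloop f h) = 0" if "4 \<le> i + j"
      using e5 mult.IH that by (cases "2 \<le> j") auto
  qed (use i1 in auto)
qed




definition V1 :: "(int \<times> int \<Rightarrow> rat) \<Rightarrow> bool" where
  "V1 F \<longleftrightarrow> (\<exists>a b. F = (\<lambda>x. a * c1 x + b * mo1 x))"
definition V3 :: "(int \<times> int \<Rightarrow> rat) \<Rightarrow> bool" where
  "V3 F \<longleftrightarrow> (\<exists>a b c d e. F = (\<lambda>x. a * c1 x + b * mo1 x + c * mo2 x + d * mo3 x + e * moq x))"

lemma ev_addF: "ev (\<lambda>x. A x + B x) f = ev A f + ev B f"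
  unfolding ev_def by (simp add: distrib_left sum.distrib)
lemma ev_smultF: "ev (\<lambda>x. c * A x) f = c * ev A f"
  unfolding ev_def by (simp add: sum_distrib_left mult_ac)

lemma V1_ev: "V1 F \<Longrightarrow> ev c1 f = 0 \<Longrightarrow> ev mo1 f = 0 \<Longrightarrow> ev F f = 0"
  unfolding V1_def by (auto simp: ev_addF ev_smultF)
lemma V3_ev: "V3 F \<Longrightarrow> ev c1 f = 0 \<Longrightarrow> ev mo1 f = 0 \<Longrightarrow> ev mo2 f = 0 \<Longrightarrow> ev mo3 f = 0 \<Longrightarrow> ev moq f = 0 \<Longrightarrow> ev F f = 0"
  unfolding V3_def by (auto simp: ev_addF ev_smultF)

lemma V1_l: "V1 F \<Longrightarrow> V1 (\<lambda>y. F (exloop x y))"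
  unfolding V1_def
  apply (elim exE, rename_tac a b)
  apply (rule_tac x="a + b * of_int (fst x)" in exI, rule_tac x=b in exI)
  by (simp add: fun_eq_iff c1_def mo1_def exloop_eq algebra_simps)
lemma V1_r: "V1 F \<Longrightarrow> V1 (\<lambda>y. F (exloop y x))"
  unfolding V1_def
  apply (elim exE, rename_tac a b)
  apply (rule_tac x="a + b * of_int (fst x)" in exI, rule_tac x=b in exI)
  by (simp add: fun_eq_iff c1_def mo1_def exloop_eq algebra_simps)

lemma V3_l: "V3 F \<Longrightarrow> V3 (\<lambda>y. F (exloop x y))"
  unfolding V3_def
  apply (elim exE, rename_tac a b c d e)
  subgoal for a b c d e
  apply (rule exI[of _ "a + b * of_int (fst x) + c * of_int (fst x)^2 + d * of_int (fst x)^3 + e * of_int (snd x)"])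
  apply (rule exI[of _ "b + 2 * c * of_int (fst x) + 3 * d * of_int (fst x)^2 + e * ((of_int (fst x) ^ 2 - of_int (fst x)) / 2)"])
  apply (rule exI[of _ "c + 3 * d * of_int (fst x)"])
  apply (rule exI[of _ d], rule exI[of _ e])
  by (simp add: fun_eq_iff c1_def mo1_def mo2_def mo3_def moq_def exloop_eq binom2_rat field_simps power2_eq_square power3_eq_cube)
  done

lemma V3_r: "V3 F \<Longrightarrow> V3 (\<lambda>y. F (exloop y x))"
  unfolding V3_def
  apply (elim exE, rename_tac a b c d e)
  subgoal for a b c d e
  apply (rule exI[of _ "a + b * of_int (fst x) + c * of_int (fst x)^2 + d * of_int (fst x)^3 + e * of_int (snd x)"])
  apply (rule exI[of _ "b + 2 * c * of_int (fst x) + 3 * d * of_int (fst x)^2 - e * of_int (fst x) / 2"])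
  apply (rule exI[of _ "c + 3 * d * of_int (fst x) + e * of_int (fst x) / 2"])
  apply (rule exI[of _ d], rule exI[of _ e])
  by (simp add: fun_eq_iff c1_def mo1_def mo2_def mo3_def moq_def exloop_eq binom2_rat field_simps power2_eq_square power3_eq_cube)
  done

lemma ev_zero: "ev F (\<lambda>_. 0) = 0" unfolding ev_def by simp

lemma ev_add_fun: "fin_supp f \<Longrightarrow> fin_supp h \<Longrightarrow> ev F (\<lambda>x. f x + h x) = ev F f + ev F h"
proof -
  assume a: "fin_supp f" "fin_supp h"
  let ?A = "{x. f x \<noteq> 0} \<union> {x. h x \<noteq> 0}"
  have fin: "finite ?A" using a unfolding fin_supp_def by auto
  have "ev F (\<lambda>x. f x + h x) = (\<Sum>x\<in>?A. (f x + h x) * F x)" by (rule ev_superset) (use fin in auto)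
  moreover have "ev F f = (\<Sum>x\<in>?A. f x * F x)" by (rule ev_superset) (use fin in auto)
  moreover have "ev F h = (\<Sum>x\<in>?A. h x * F x)" by (rule ev_superset) (use fin in auto)
  ultimately show ?thesis by (simp add: distrib_right sum.distrib)
qed

lemma ev_smult_fun: "fin_supp f \<Longrightarrow> ev F (\<lambda>x. c * f x) = c * ev F f"
proof -
  assume a: "fin_supp f"
  let ?A = "{x. f x \<noteq> 0}"
  have fin: "finite ?A" using a unfolding fin_supp_def by auto
  have "ev F (\<lambda>x. c * f x) = (\<Sum>x\<in>?A. (c * f x) * F x)" by (rule ev_superset) (use fin in auto)
  then show ?thesis by (simp add: ev_def sum_distrib_left mult_ac)
qed

lemma Ipow_van:
  "f \<in> I_pow exloop k \<Longrightarrow> fin_supp f \<and> (2 \<le> k \<longrightarrow> (\<forall>F. V1 F \<longrightarrow> ev F f = 0))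
     \<and> (4 \<le> k \<longrightarrow> (\<forall>F. V3 F \<longrightarrow> ev F f = 0))"
proof (induction rule: I_pow.induct)
  case (gen n f)
  then show ?case using Iprod_van[OF gen(1)] by (auto intro: V1_ev V3_ev)
next
  case zero
  then show ?case by (simp add: ev_zero)
next
  case (add f h)
  then show ?case by (simp add: ev_add_fun)
next
  case (smult f c)
  then show ?case by (simp add: ev_smult_fun)
next
  case (lmult f a)
  then show ?case by (auto simp: ev_lmult V1_l V3_l)
next
  case (rmult f a)
  then show ?case by (auto simp: ev_rmult V1_r V3_r)
qed




lemma binom2_simps[simp]: "binom2 0 = 0" "binom2 1 = 0" "binom2 2 = 1"
  by (simp_all add: binom2_def)

lemma d_aug: "(\<lambda>u. basis_el z u - basis_el (0::int,0::int) u) \<in> aug_ideal"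
proof -
  have "augm (\<lambda>u. basis_el z u - basis_el (0::int,0::int) u) = ev c1 (\<lambda>u. basis_el z u - basis_el (0,0) u)"
    by (simp add: augm_def ev_def c1_def)
  also have "\<dots> = 0"
    by (subst ev_superset[of "{z, (0,0)}"]) (auto simp: basis_el_def c1_def sum.insert_if)
  finally show ?thesis by (simp add: aug_ideal_def)
qed

lemma t_in: "(\<lambda>u. basis_el (0, q) u - basis_el (0::int,0::int) u) \<in> I_pow exloop 3"
proof -
  define d where "d z = (\<lambda>u. basis_el z u - basis_el (0::int,0::int) u)" for z
  define P1 where "P1 = la_mult exloop (la_mult exloop (d (1,0)) (d (1,0))) (d (q,0))"
  define P2 where "P2 = la_mult exloop (d (1,0)) (la_mult exloop (d (1,0)) (d (q,0)))"
  have b: "I_prod exloop 1 (d z)" for z unfolding d_def by (rule I_prod.base[OF d_aug])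
  have "I_prod exloop ((1+1)+1) P1" unfolding P1_def by (intro I_prod.mult b)
  then have p1: "P1 \<in> I_pow exloop 3" by (intro I_pow.gen) auto
  have "I_prod exloop (1+(1+1)) P2" unfolding P2_def by (intro I_prod.mult b)
  then have p2: "P2 \<in> I_pow exloop 3" by (intro I_pow.gen) auto
  define v where "v = (- (q+2), - binom2 (- (q+2)) * (q+2))"
  have G: "la_mult exloop (basis_el v) (\<lambda>u. P1 u + (-1) * P2 u) \<in> I_pow exloop 3"
    by (intro I_pow.lmult I_pow.add I_pow.smult p1 p2 fin_supp_basis)
  have "la_mult exloop (basis_el v) (\<lambda>u. P1 u + (-1) * P2 u) = (\<lambda>u. basis_el (0, q) u - basis_el (0,0) u)"
    unfolding P1_def P2_def d_def v_def
    apply (simp add: la_mult_diff_left la_mult_diff_right la_mult_add_right la_mult_smult_right la_mult_basis la_mult_add_left la_mult_smult_left)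
    apply (rule ext)
    apply (simp add: exloop_eq)
    apply (simp add: algebra_simps)
    done
  with G show ?thesis by simp
qed




lemma ev_d: "ev F (\<lambda>x. basis_el g x - basis_el e x) = F g - F e"
  by (subst ev_superset[of "{g, e}"]) (auto simp: basis_el_def sum.insert_if)

lemma I_pow_mono: "f \<in> I_pow m k \<Longrightarrow> j \<le> k \<Longrightarrow> f \<in> I_pow m j"
  by (induction rule: I_pow.induct) (auto intro: I_pow.intros)

lemma V1_mo1: "V1 mo1" unfolding V1_def by (rule exI[of _ 0], rule exI[of _ 1]) simp
lemma V3_mo1: "V3 mo1" unfolding V3_def
  by (rule exI[of _ 0], rule exI[of _ 1], rule exI[of _ 0], rule exI[of _ 0], rule exI[of _ 0]) simp
lemma V3_moq: "V3 moq" unfolding V3_def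
  by (rule exI[of _ 0], rule exI[of _ 0], rule exI[of _ 0], rule exI[of _ 0], rule exI[of _ 1]) simp

lemma dim_le2: "2 \<le> k \<Longrightarrow> dim_sub exloop (0,0) k \<subseteq> {(0,q) | q. True}"
proof
  fix g assume k: "2 \<le> k" and "g \<in> dim_sub exloop (0,0) k"
  then have "(\<lambda>x. basis_el g x - basis_el (0,0) x) \<in> I_pow exloop k" by (simp add: dim_sub_def)
  then have "ev mo1 (\<lambda>x. basis_el g x - basis_el (0,0) x) = 0" using Ipow_van k V1_mo1 by blast
  then have "fst g = 0" by (simp add: ev_d mo1_def)
  then show "g \<in> {(0,q) | q. True}" by (cases g) auto
qed

lemma dim_le4: "4 \<le> k \<Longrightarrow> dim_sub exloop (0,0) k \<subseteq> {(0,0)}"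
proof
  fix g assume k: "4 \<le> k" and "g \<in> dim_sub exloop (0,0) k"
  then have "(\<lambda>x. basis_el g x - basis_el (0,0) x) \<in> I_pow exloop k" by (simp add: dim_sub_def)
  then have "ev mo1 (\<lambda>x. basis_el g x - basis_el (0,0) x) = 0"
      "ev moq (\<lambda>x. basis_el g x - basis_el (0,0) x) = 0" using Ipow_van k V3_mo1 V3_moq by blast+
  then have "fst g = 0" "snd g = 0" by (simp_all add: ev_d mo1_def moq_def)
  then show "g \<in> {(0,0)}" by (cases g) auto
qed

lemma e_in: "(0,0) \<in> dim_sub exloop (0,0) k"
  unfolding dim_sub_def using I_pow.zero by simp

lemma dim_ge3: "j \<le> 3 \<Longrightarrow> {(0,q) | q. True} \<subseteq> dim_sub exloop (0,0) j"
  unfolding dim_sub_def using t_in I_pow_mono by blast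

lemma dims:
  "tf_nilpotent_class exloop (0, 0) 3
    \<and> dim_sub exloop (0, 0) 2 = {(0, q) | q. True}
    \<and> dim_sub exloop (0, 0) 3 = {(0, q) | q. True}"
proof -
  have a: "dim_sub exloop (0, 0) 2 = {(0, q) | q. True}" using dim_le2[of 2] dim_ge3[of 2] by auto
  have b: "dim_sub exloop (0, 0) 3 = {(0, q) | q. True}" using dim_le2[of 3] dim_ge3[of 3] by auto
  have c: "dim_sub exloop (0, 0) (3+1) = {(0,0)}" using dim_le4[of 4] e_in[of 4] by auto
  have "(0,1) \<in> dim_sub exloop (0, 0) 3" using b by auto
  then have "dim_sub exloop (0, 0) 3 \<noteq> {(0,0)}" by auto
  with a b c show ?thesis unfolding tf_nilpotent_class_def by simp
qed




context group begin

lemma comm_one_if: "g \<in> carrier G \<Longrightarrow> h \<in> carrier G \<Longrightarrow> g \<otimes> h = h \<otimes> g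
   \<Longrightarrow> inv g \<otimes> inv h \<otimes> g \<otimes> h = \<one>"
  by (metis inv_mult_group m_assoc l_inv m_closed inv_closed)

lemma comm_one_only: "g \<in> carrier G \<Longrightarrow> h \<in> carrier G \<Longrightarrow> inv g \<otimes> inv h \<otimes> g \<otimes> h = \<one>
   \<Longrightarrow> g \<otimes> h = h \<otimes> g"
proof -
  assume a: "g \<in> carrier G" "h \<in> carrier G" "inv g \<otimes> inv h \<otimes> g \<otimes> h = \<one>"
  then have "inv (h \<otimes> g) \<otimes> (g \<otimes> h) = \<one>" by (simp add: inv_mult_group m_assoc)
  then have "inv (g \<otimes> h) = inv (h \<otimes> g)" using a by (intro inv_equality) auto
  then show ?thesis using a by (metis inv_inv m_closed)
qed

end

definition heis :: "int \<Rightarrow> int \<Rightarrow> int \<Rightarrow> int \<times> int \<Rightarrow> int \<times> int" where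
  "heis a b c = (\<lambda>x. (fst x + a, snd x + b + c * fst x))"

definition HH :: "(int \<times> int \<Rightarrow> int \<times> int) set" where
  "HH = {f. \<exists>a b c. f = heis a b c}"

lemma heis_inj: "heis a b c = heis a' b' c' \<Longrightarrow> a = a' \<and> b = b' \<and> c = c'"
proof -
  assume e: "heis a b c = heis a' b' c'"
  have "heis a b c (0,0) = heis a' b' c' (0,0)" "heis a b c (1,0) = heis a' b' c' (1,0)" using e by auto
  then show ?thesis by (simp add: heis_def)
qed

lemma heis_comp: "compose UNIV (heis a b c) (heis a' b' c') = heis (a+a') (b+b'+c*a') (c+c')"
  by (simp add: compose_def heis_def fun_eq_iff algebra_simps)

lemma heis_id: "(\<lambda>x\<in>UNIV. x) = heis 0 0 0"
  by (simp add: heis_def fun_eq_iff)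

lemma heis_Bij: "heis a b c \<in> Bij UNIV"
proof -
  have "bij (heis a b c)"
    by (rule o_bij[where g="heis (-a) (-b + c*a) (-c)"]) (auto simp: heis_def fun_eq_iff algebra_simps)
  then show ?thesis by (simp add: Bij_def)
qed

lemma heis_in_HH[simp]: "heis a b c \<in> HH" by (auto simp: HH_def)

lemma HH_Bij: "f \<in> HH \<Longrightarrow> f \<in> Bij UNIV" using heis_Bij by (auto simp: HH_def)

lemma L_heis: "(\<lambda>x. exloop a x) = heis (fst a) (snd a) (binom2 (fst a))"
  by (simp add: heis_def exloop_eq fun_eq_iff algebra_simps)

abbreviation "BB \<equiv> BijGroup (UNIV :: (int \<times> int) set)"

lemma BB_mult: "f \<in> Bij UNIV \<Longrightarrow> g \<in> Bij UNIV \<Longrightarrow> f \<otimes>\<^bsub>BB\<^esub> g = compose UNIV f g"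
  by (simp add: BijGroup_def)

lemma BB_heis_mult: "heis a b c \<otimes>\<^bsub>BB\<^esub> heis a' b' c' = heis (a+a') (b+b'+c*a') (c+c')"
  by (simp add: BB_mult heis_Bij heis_comp)

lemma BB_one: "\<one>\<^bsub>BB\<^esub> = heis 0 0 0"
  by (simp add: BijGroup_def heis_id)

lemma BB_carrier: "carrier BB = Bij UNIV" by (simp add: BijGroup_def)

lemma BB_inv: "inv\<^bsub>BB\<^esub> (heis a b c) = heis (-a) (-b + c*a) (-c)"
  by (rule group.inv_equality[OF group_BijGroup])
     (auto simp: BB_heis_mult BB_one heis_Bij BB_carrier algebra_simps)

lemma carrier_G: "carrier (LMlt exloop) = generate BB (Bij UNIV \<inter> range (\<lambda>a. (\<lambda>x. exloop a x)))"
  by (simp add: LMlt_def carrier_subgroup_generated BijGroup_def)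

lemma carrier_G_HH: "carrier (LMlt exloop) \<subseteq> HH"
proof
  fix f assume "f \<in> carrier (LMlt exloop)"
  then have "f \<in> generate BB (Bij UNIV \<inter> range (\<lambda>a. (\<lambda>x. exloop a x)))" by (simp add: carrier_G)
  then show "f \<in> HH"
  proof (induction rule: generate.induct)
    case one then show ?case by (auto simp: BB_one HH_def)
  next
    case (incl h) then show ?case by (auto simp: L_heis HH_def)
  next
    case (inv h) then obtain a where "h = heis (fst a) (snd a) (binom2 (fst a))" by (auto simp: L_heis)
    then show ?case apply (simp only: BB_inv HH_def mem_Collect_eq) apply (rule exI)+ apply (rule refl) done
  next
    case (eng h1 h2)
    then obtain a b c a' b' c' where "h1 = heis a b c" "h2 = heis a' b' c'" by (auto simp: HH_def)
    then show ?case by (simp add: BB_heis_mult)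
  qed
qed

lemma grpG: "group (LMlt exloop)"
  unfolding LMlt_def by (rule group.group_subgroup_generated[OF group_BijGroup])

lemma G_mult: "mult (LMlt exloop) = mult BB" by (simp add: LMlt_def)
lemma G_one: "\<one>\<^bsub>LMlt exloop\<^esub> = heis 0 0 0" by (simp add: LMlt_def BB_one)

lemma G_heis_mult: "heis a b c \<otimes>\<^bsub>LMlt exloop\<^esub> heis a' b' c' = heis (a+a') (b+b'+c*a') (c+c')"
  by (simp add: G_mult BB_heis_mult)

lemma inG_heis: "f \<in> carrier (LMlt exloop) \<Longrightarrow> \<exists>a b c. f = heis a b c"
  using carrier_G_HH by (auto simp: HH_def)

definition TT :: "(int \<times> int \<Rightarrow> int \<times> int) set" where
  "TT = {f. \<exists>b. f = heis 0 b 0}"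

lemma lc1_TT: "lower_central (LMlt exloop) 1 \<subseteq> carrier (LMlt exloop) \<inter> TT"
proof -
  let ?G = "LMlt exloop"
  interpret G: group ?G by (rule grpG)
  let ?S = "{inv\<^bsub>?G\<^esub> g \<otimes>\<^bsub>?G\<^esub> inv\<^bsub>?G\<^esub> h \<otimes>\<^bsub>?G\<^esub> g \<otimes>\<^bsub>?G\<^esub> h | g h. g \<in> carrier ?G \<and> h \<in> lower_central ?G 0}"
  have S: "?S \<subseteq> carrier ?G \<inter> TT"
  proof
    fix x assume "x \<in> ?S"
    then obtain g h where x: "x = inv\<^bsub>?G\<^esub> g \<otimes>\<^bsub>?G\<^esub> inv\<^bsub>?G\<^esub> h \<otimes>\<^bsub>?G\<^esub> g \<otimes>\<^bsub>?G\<^esub> h"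
      and g: "g \<in> carrier ?G" and h: "h \<in> carrier ?G" by auto
    have xc: "x \<in> carrier ?G" using x g h by simp
    obtain a2 b2 c2 where g2: "g = heis a2 b2 c2" using inG_heis g by blast
    obtain a4 b4 c4 where h4: "h = heis a4 b4 c4" using inG_heis h by blast
    obtain a1 b1 c1 where g1: "inv\<^bsub>?G\<^esub> g = heis a1 b1 c1" using inG_heis G.inv_closed[OF g] by blast
    obtain a3 b3 c3 where h3: "inv\<^bsub>?G\<^esub> h = heis a3 b3 c3" using inG_heis G.inv_closed[OF h] by blast
    have "heis a1 b1 c1 \<otimes>\<^bsub>?G\<^esub> heis a2 b2 c2 = heis 0 0 0" using G.l_inv[OF g] unfolding g1 unfolding g2 G_one by simp
    then have "heis (a1+a2) (b1+b2+c1*a2) (c1+c2) = heis 0 0 0" by (simp add: G_heis_mult)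
    then have 1: "a1 + a2 = 0" "c1 + c2 = 0" using heis_inj by blast+
    have "heis a3 b3 c3 \<otimes>\<^bsub>?G\<^esub> heis a4 b4 c4 = heis 0 0 0" using G.l_inv[OF h] unfolding h3 unfolding h4 G_one by simp
    then have "heis (a3+a4) (b3+b4+c3*a4) (c3+c4) = heis 0 0 0" by (simp add: G_heis_mult)
    then have 2: "a3 + a4 = 0" "c3 + c4 = 0" using heis_inj by blast+
    have "x = heis (a1+a3+a2+a4) (b1 + b3 + c1 * a3 + b2 + (c1 + c3) * a2 + b4 + (c1 + c3 + c2) * a4) (c1+c3+c2+c4)"
      unfolding x g1 h3 unfolding g2 h4 by (simp add: G_heis_mult algebra_simps)
    moreover have "a1+a3+a2+a4 = 0" "c1+c3+c2+c4 = 0" using 1 2 by simp_all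
    ultimately have "x \<in> TT" unfolding TT_def by auto
    then show "x \<in> carrier ?G \<inter> TT" using xc by simp
  qed
  have "generate ?G ?S \<subseteq> carrier ?G \<inter> TT"
  proof
    fix x assume "x \<in> generate ?G ?S"
    then show "x \<in> carrier ?G \<inter> TT"
    proof (induction rule: generate.induct)
      case one then show ?case using G.one_closed unfolding G_one TT_def by auto
    next
      case (incl h) then show ?case using S by auto
    next
      case (inv h)
      then have h: "h \<in> carrier ?G" "h \<in> TT" using S by auto
      then obtain b where hb: "h = heis 0 b 0" by (auto simp: TT_def)
      obtain a1 b1 c1 where h1: "inv\<^bsub>?G\<^esub> h = heis a1 b1 c1" using inG_heis G.inv_closed[OF h(1)] by blast
      have "heis 0 b 0 \<otimes>\<^bsub>?G\<^esub> heis a1 b1 c1 = heis 0 0 0" using G.r_inv[OF h(1)] unfolding h1 unfolding hb G_one by simp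
      then have "heis a1 (b + b1) c1 = heis 0 0 0" by (simp add: G_heis_mult)
      then have "a1 = 0" "c1 = 0" using heis_inj by blast+
      then show ?case using h1 G.inv_closed[OF h(1)] by (auto simp: TT_def)
    next
      case (eng h1 h2) then show ?case by (auto simp: TT_def G_heis_mult)
    qed
  qed
  then show ?thesis by simp
qed

lemma lc2: "lower_central (LMlt exloop) 2 = {\<one>\<^bsub>LMlt exloop\<^esub>}"
proof -
  let ?G = "LMlt exloop"
  interpret G: group ?G by (rule grpG)
  let ?S = "{inv\<^bsub>?G\<^esub> g \<otimes>\<^bsub>?G\<^esub> inv\<^bsub>?G\<^esub> h \<otimes>\<^bsub>?G\<^esub> g \<otimes>\<^bsub>?G\<^esub> h | g h. g \<in> carrier ?G \<and> h \<in> lower_central ?G 1}"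
  have S: "?S \<subseteq> {\<one>\<^bsub>?G\<^esub>}"
  proof
    fix x assume "x \<in> ?S"
    then obtain g h where x: "x = inv\<^bsub>?G\<^esub> g \<otimes>\<^bsub>?G\<^esub> inv\<^bsub>?G\<^esub> h \<otimes>\<^bsub>?G\<^esub> g \<otimes>\<^bsub>?G\<^esub> h"
      and g: "g \<in> carrier ?G" and h: "h \<in> lower_central ?G 1" by auto
    have h': "h \<in> carrier ?G" "h \<in> TT" using h lc1_TT by auto
    then obtain b where hb: "h = heis 0 b 0" by (auto simp: TT_def)
    obtain a2 b2 c2 where g2: "g = heis a2 b2 c2" using inG_heis g by blast
    have "g \<otimes>\<^bsub>?G\<^esub> h = h \<otimes>\<^bsub>?G\<^esub> g" by (simp add: g2 hb G_heis_mult add_ac)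
    then show "x \<in> {\<one>\<^bsub>?G\<^esub>}" using G.comm_one_if[OF g h'(1)] x by simp
  qed
  have "generate ?G ?S \<subseteq> {\<one>\<^bsub>?G\<^esub>}"
  proof
    fix x assume "x \<in> generate ?G ?S"
    then show "x \<in> {\<one>\<^bsub>?G\<^esub>}"
    proof (induction rule: generate.induct)
      case (inv h) then have "h = \<one>\<^bsub>?G\<^esub>" using S by blast
      then show ?case by simp
    next
      case (incl h) then show ?case using S by blast
    next
      case (eng h1 h2) then show ?case by simp
    qed simp
  qed
  moreover have "\<one>\<^bsub>?G\<^esub> \<in> generate ?G ?S" by (rule generate.one)
  ultimately have "generate ?G ?S = {\<one>\<^bsub>?G\<^esub>}" by blast
  then show ?thesis by (simp add: numeral_2_eq_2)
qed

lemma lc1_ne: "lower_central (LMlt exloop) 1 \<noteq> {\<one>\<^bsub>LMlt exloop\<^esub>}"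
proof
  let ?G = "LMlt exloop"
  interpret G: group ?G by (rule grpG)
  assume a: "lower_central ?G 1 = {\<one>\<^bsub>?G\<^esub>}"
  have gen: "(\<lambda>x. exloop a x) \<in> carrier ?G" for a
    unfolding carrier_G by (rule generate.incl) (simp add: bij_L Bij_def)
  define g where "g = (\<lambda>x. exloop (1,0) x)"
  define h where "h = (\<lambda>x. exloop (2,0) x)"
  have g: "g \<in> carrier ?G" and h: "h \<in> carrier ?G" unfolding g_def h_def using gen by auto
  have "inv\<^bsub>?G\<^esub> g \<otimes>\<^bsub>?G\<^esub> inv\<^bsub>?G\<^esub> h \<otimes>\<^bsub>?G\<^esub> g \<otimes>\<^bsub>?G\<^esub> h \<in> lower_central ?G 1"
    using g h by (auto intro!: generate.incl)
  then have "inv\<^bsub>?G\<^esub> g \<otimes>\<^bsub>?G\<^esub> inv\<^bsub>?G\<^esub> h \<otimes>\<^bsub>?G\<^esub> g \<otimes>\<^bsub>?G\<^esub> h = \<one>\<^bsub>?G\<^esub>" using a by simp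
  then have "g \<otimes>\<^bsub>?G\<^esub> h = h \<otimes>\<^bsub>?G\<^esub> g" using G.comm_one_only[OF g h] by simp
  moreover have "g = heis 1 0 0" "h = heis 2 0 1" unfolding g_def h_def L_heis by (simp_all add: binom2_def)
  ultimately have e: "heis 3 0 1 = heis 3 1 1" by (simp add: G_heis_mult)
  show False using heis_inj[OF e] by simp
qed

lemma nilG: "nilpotent_class (LMlt exloop) 2"
  unfolding nilpotent_class_def using lc2 lc1_ne by simp


theorem proposition3p4:
  shows "is_loop exloop (0, 0)
    \<and> tf_nilpotent_class exloop (0, 0) 3
    \<and> dim_sub exloop (0, 0) 2 = {(0, q) | q. True}
    \<and> dim_sub exloop (0, 0) 3 = {(0, q) | q. True}
    \<and> nilpotent_class (LMlt exloop) 2"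
  using loop dims nilG by blast

end
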